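(* Let $\Omega$ be a domain in $S^m\times S^n$ and let $g(r,p,q)$ be a positive smooth function on $\mathbb R^3$ such that, for some constant $r_0$, $g_r>0$ whenever $r\le r_0$. For smooth $w$ with $M(w)$ positive definite set $G(w)=\det M(w)\,[g(w,|\nabla_x w|^2,|\nabla_y w|^2)]^{-1}$. Let $u,v$ be smooth functions on $\bar\Omega$ with $M(u),M(v)$ positive definite, $u,v\le r_0$ and $G(u)\le G(v)$ in $\Omega$. Then either $v-\sup_{\partial\Omega}(v-u)\le u$ in $\Omega$, or $v\le u$ in $\Omega$.
   Context: $S^m\times S^n$ carries the product of standard unit-sphere metrics; with local orthonormal frames $e_1,\dots,e_m$ of $S^m$ and $e_{m+1},\dots,e_{m+n}$ of $S^n$, indices $i,j\in\{1,\dots,m\}$, $\alpha,\beta\in\{m+1,\dots,m+n\}$, and $w_A,w_{AB}$ covariant derivatives. $|\nabla_x w|^2=\sum_i w_i^2$, $|\nabla_y w|^2=\sum_\alpha w_\alpha^2$. $M(w)$ is the symmetric matrix with $M(w)_{ij}=w_{ij}-w_iw_j-\delta_{ij}$, $M(w)_{i\alpha}=w_{i\alpha}$, $M(w)_{\alpha\beta}=w_{\alpha\beta}+w_\alpha w_\beta+\delta_{\alpha\beta}$. *)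

theory Defs
  imports "HOL-Analysis.Analysis"
begin

text \<open>Points of S^m x S^n are modelled inside R^(m+1) x R^(n+1) = real^'a x real^'b,
  with m+1 = CARD('a), n+1 = CARD('b).\<close>

definition sphere_prod :: "((real^'a) \<times> (real^'b)) set" where
  "sphere_prod = sphere 0 1 \<times> sphere 0 1"

definition tangent :: "(real^'a) \<times> (real^'b) \<Rightarrow> ((real^'a) \<times> (real^'b)) set" where
  "tangent p = {(a, b). a \<bullet> fst p = 0 \<and> b \<bullet> snd p = 0}"

fun Ck_on :: "nat \<Rightarrow> 'v::euclidean_space set \<Rightarrow> ('v \<Rightarrow> real) \<Rightarrow> bool" where
  "Ck_on 0 S f = continuous_on S f"
| "Ck_on (Suc k) S f =
     (f differentiable_on S \<and> (\<forall>h. Ck_on k S (\<lambda>p. frechet_derivative f (at p) h)))"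

definition smooth_on :: "'v::euclidean_space set \<Rightarrow> ('v \<Rightarrow> real) \<Rightarrow> bool" where
  "smooth_on S f \<longleftrightarrow> open S \<and> (\<forall>k. Ck_on k S f)"

definition D1 :: "((real^'a) \<times> (real^'b) \<Rightarrow> real) \<Rightarrow> (real^'a) \<times> (real^'b) \<Rightarrow> (real^'a) \<times> (real^'b) \<Rightarrow> real" where
  "D1 w p h = frechet_derivative w (at p) h"

definition D2 :: "((real^'a) \<times> (real^'b) \<Rightarrow> real) \<Rightarrow> (real^'a) \<times> (real^'b)
                   \<Rightarrow> (real^'a) \<times> (real^'b) \<Rightarrow> (real^'a) \<times> (real^'b) \<Rightarrow> real" where
  "D2 w p h k = frechet_derivative (\<lambda>q. D1 w q h) (at p) k"

definition amb_grad_x :: "((real^'a) \<times> (real^'b) \<Rightarrow> real) \<Rightarrow> (real^'a) \<times> (real^'b) \<Rightarrow> real^'a" where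
  "amb_grad_x w p = (\<Sum>i\<in>Basis. D1 w p (i, 0) *\<^sub>R i)"

definition amb_grad_y :: "((real^'a) \<times> (real^'b) \<Rightarrow> real) \<Rightarrow> (real^'a) \<times> (real^'b) \<Rightarrow> real^'b" where
  "amb_grad_y w p = (\<Sum>i\<in>Basis. D1 w p (0, i) *\<^sub>R i)"

definition grad_x :: "((real^'a) \<times> (real^'b) \<Rightarrow> real) \<Rightarrow> (real^'a) \<times> (real^'b) \<Rightarrow> real^'a" where
  "grad_x w p = amb_grad_x w p - (amb_grad_x w p \<bullet> fst p) *\<^sub>R fst p"

definition grad_y :: "((real^'a) \<times> (real^'b) \<Rightarrow> real) \<Rightarrow> (real^'a) \<times> (real^'b) \<Rightarrow> real^'b" where
  "grad_y w p = amb_grad_y w p - (amb_grad_y w p \<bullet> snd p) *\<^sub>R snd p"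

definition hess :: "((real^'a) \<times> (real^'b) \<Rightarrow> real) \<Rightarrow> (real^'a) \<times> (real^'b)
                   \<Rightarrow> (real^'a) \<times> (real^'b) \<Rightarrow> (real^'a) \<times> (real^'b) \<Rightarrow> real" where
  "hess w p X Y = D2 w p X Y
      - (fst X \<bullet> fst Y) * (fst p \<bullet> amb_grad_x w p)
      - (snd X \<bullet> snd Y) * (snd p \<bullet> amb_grad_y w p)"

text \<open>The symmetric form M(w): M_ij = w_ij - w_i w_j - delta_ij, M_ia = w_ia,
  M_ab = w_ab + w_a w_b + delta_ab.\<close>
definition Mform :: "((real^'a) \<times> (real^'b) \<Rightarrow> real) \<Rightarrow> (real^'a) \<times> (real^'b)
                   \<Rightarrow> (real^'a) \<times> (real^'b) \<Rightarrow> (real^'a) \<times> (real^'b) \<Rightarrow> real" where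
  "Mform w p X Y = hess w p X Y
      - (grad_x w p \<bullet> fst X) * (grad_x w p \<bullet> fst Y) - fst X \<bullet> fst Y
      + (grad_y w p \<bullet> snd X) * (grad_y w p \<bullet> snd Y) + snd X \<bullet> snd Y"

definition M_posdef :: "((real^'a) \<times> (real^'b) \<Rightarrow> real) \<Rightarrow> (real^'a) \<times> (real^'b) \<Rightarrow> bool" where
  "M_posdef w p \<longleftrightarrow> (\<forall>X\<in>tangent p. X \<noteq> 0 \<longrightarrow> Mform w p X X > 0)"

definition tdim :: "('a::finite \<times> 'b::finite) itself \<Rightarrow> nat" where
  "tdim _ = CARD('a) + CARD('b) - 2"

definition is_onframe :: "(real^'a) \<times> (real^'b) \<Rightarrow> (nat \<Rightarrow> (real^'a) \<times> (real^'b)) \<Rightarrow> bool" where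
  "is_onframe p e \<longleftrightarrow>
     (\<forall>i<tdim TYPE('a \<times> 'b). e i \<in> tangent p) \<and>
     (\<forall>i<tdim TYPE('a \<times> 'b). \<forall>j<tdim TYPE('a \<times> 'b). e i \<bullet> e j = (if i = j then 1 else 0)) \<and>
     span (e ` {..<tdim TYPE('a \<times> 'b)}) = tangent p"

text \<open>det M(w) computed in a (any) local orthonormal frame; Leibniz formula.\<close>
definition detM :: "((real^'a) \<times> (real^'b) \<Rightarrow> real) \<Rightarrow> (real^'a) \<times> (real^'b) \<Rightarrow> real" where
  "detM w p = (let e = (SOME e. is_onframe p e); d = tdim TYPE('a \<times> 'b) in
     (\<Sum>\<sigma> | \<sigma> permutes {..<d}. of_int (sign \<sigma>) * (\<Prod>i<d. Mform w p (e i) (e (\<sigma> i)))))"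

definition sq_grad_x :: "((real^'a) \<times> (real^'b) \<Rightarrow> real) \<Rightarrow> (real^'a) \<times> (real^'b) \<Rightarrow> real" where
  "sq_grad_x w p = (norm (grad_x w p))\<^sup>2"

definition sq_grad_y :: "((real^'a) \<times> (real^'b) \<Rightarrow> real) \<Rightarrow> (real^'a) \<times> (real^'b) \<Rightarrow> real" where
  "sq_grad_y w p = (norm (grad_y w p))\<^sup>2"

definition Gop :: "(real \<Rightarrow> real \<Rightarrow> real \<Rightarrow> real) \<Rightarrow> ((real^'a) \<times> (real^'b) \<Rightarrow> real)
                   \<Rightarrow> (real^'a) \<times> (real^'b) \<Rightarrow> real" where
  "Gop g w p = detM w p / g (w p) (sq_grad_x w p) (sq_grad_y w p)"

end

theory Submission
  imports Defs "Jordan_Normal_Form.Determinant"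
begin

no_notation Matrix.scalar_prod (infix \<open>\<bullet>\<close> 70)
hide_const (open) Matrix.orthogonal
hide_fact (open) Matrix.orthogonal_def


lemma smooth_open: "smooth_on W w \<Longrightarrow> open W" by (simp add: smooth_on_def)

lemma smooth_cont: "smooth_on W w \<Longrightarrow> continuous_on W w"
  unfolding smooth_on_def by (metis Ck_on.simps(1))

lemma smooth_hasd: assumes "smooth_on W w" "q \<in> W"
  shows "(w has_derivative frechet_derivative w (at q)) (at q)"
proof -
  have "w differentiable_on W" using assms(1) unfolding smooth_on_def by (metis Ck_on.simps(2))
  hence "w differentiable at q" using assms smooth_open differentiable_on_eq_differentiable_at by blast
  thus ?thesis using frechet_derivative_works by blast
qed

lemma smooth_deriv: assumes "smooth_on W w"
  shows "smooth_on W (\<lambda>p. frechet_derivative w (at p) h)"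
  using assms unfolding smooth_on_def by (metis Ck_on.simps(2))

lemma line_deriv:
  fixes f :: "'v::real_normed_vector \<Rightarrow> real"
  assumes "(f has_derivative f') (at (c + s *\<^sub>R v))"
  shows "((\<lambda>t. f (c + t *\<^sub>R v)) has_real_derivative f' v) (at s)"
proof -
  have l: "linear f'" using assms has_derivative_linear by blast
  have "((\<lambda>t. c + t *\<^sub>R v) has_derivative (\<lambda>t. t *\<^sub>R v)) (at s)"
    by (auto intro!: derivative_eq_intros)
  from has_derivative_compose[OF this assms]
  show ?thesis
    by (rule has_derivative_imp_has_field_derivative) (simp add: linear_cmul[OF l])
qed

lemma mixed_mvt:
  fixes w :: "'v::euclidean_space \<Rightarrow> real"
  assumes sm: "smooth_on W w" and t: "0 < t"
    and sub: "\<And>s \<tau>. 0 \<le> s \<Longrightarrow> s \<le> t \<Longrightarrow> 0 \<le> \<tau> \<Longrightarrow> \<tau> \<le> t \<Longrightarrow> p + s *\<^sub>R h + \<tau> *\<^sub>R k \<in> W"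
  shows "\<exists>s \<tau>. 0 < s \<and> s < t \<and> 0 < \<tau> \<and> \<tau> < t \<and>
     w (p + t *\<^sub>R h + t *\<^sub>R k) - w (p + t *\<^sub>R h) - w (p + t *\<^sub>R k) + w p =
     t\<^sup>2 * frechet_derivative (\<lambda>q. frechet_derivative w (at q) h) (at (p + s *\<^sub>R h + \<tau> *\<^sub>R k)) k"
proof -
  define Dh where "Dh q = frechet_derivative w (at q) h" for q
  have smh: "smooth_on W Dh" unfolding Dh_def using smooth_deriv[OF sm] .
  define \<phi> where "\<phi> s = w ((p + t *\<^sub>R k) + s *\<^sub>R h) - w (p + s *\<^sub>R h)" for s
  have "DERIV \<phi> s :> Dh (p + t *\<^sub>R k + s *\<^sub>R h) - Dh (p + s *\<^sub>R h)" if "0 \<le> s" "s \<le> t" for s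
  proof -
    have m1: "p + t *\<^sub>R k + s *\<^sub>R h \<in> W" using sub[of s t] that t by (simp add: algebra_simps)
    have m2: "p + s *\<^sub>R h \<in> W" using sub[of s 0] that t by simp
    show ?thesis unfolding \<phi>_def Dh_def
      by (intro DERIV_diff line_deriv smooth_hasd[OF sm] m1 m2)
  qed
  from MVT2[OF t this] obtain s where s: "0 < s" "s < t"
    and e1: "\<phi> t - \<phi> 0 = (t - 0) * (Dh (p + t *\<^sub>R k + s *\<^sub>R h) - Dh (p + s *\<^sub>R h))" by blast
  define \<psi> where "\<psi> \<tau> = Dh ((p + s *\<^sub>R h) + \<tau> *\<^sub>R k)" for \<tau>
  have "DERIV \<psi> \<tau> :> frechet_derivative Dh (at (p + s *\<^sub>R h + \<tau> *\<^sub>R k)) k" if "0 \<le> \<tau>" "\<tau> \<le> t" for \<tau>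
    unfolding \<psi>_def
    by (intro line_deriv smooth_hasd[OF smh]) (use sub[of s \<tau>] that s in auto)
  from MVT2[OF t this] obtain \<tau> where tau: "0 < \<tau>" "\<tau> < t"
    and e2: "\<psi> t - \<psi> 0 = (t - 0) * frechet_derivative Dh (at (p + s *\<^sub>R h + \<tau> *\<^sub>R k)) k" by blast
  have "w (p + t *\<^sub>R h + t *\<^sub>R k) - w (p + t *\<^sub>R h) - w (p + t *\<^sub>R k) + w p = \<phi> t - \<phi> 0"
    unfolding \<phi>_def by (simp add: algebra_simps)
  also have "\<dots> = t * (\<psi> t - \<psi> 0)" unfolding e1 \<psi>_def by (simp add: algebra_simps)
  also have "\<dots> = t\<^sup>2 * frechet_derivative Dh (at (p + s *\<^sub>R h + \<tau> *\<^sub>R k)) k"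
    unfolding e2 by (simp add: power2_eq_square)
  finally show ?thesis using s tau unfolding Dh_def by blast
qed

lemma schwarz:
  fixes w :: "'v::euclidean_space \<Rightarrow> real"
  assumes sm: "smooth_on W w" and p: "p \<in> W"
  shows "frechet_derivative (\<lambda>q. frechet_derivative w (at q) h) (at p) k =
         frechet_derivative (\<lambda>q. frechet_derivative w (at q) k) (at p) h"
proof (rule ccontr)
  define F where "F q = frechet_derivative (\<lambda>q. frechet_derivative w (at q) h) (at q) k" for q
  define G where "G q = frechet_derivative (\<lambda>q. frechet_derivative w (at q) k) (at q) h" for q
  assume "\<not> ?thesis"
  hence ne: "F p \<noteq> G p" unfolding F_def G_def .
  define e where "e = \<bar>F p - G p\<bar> / 3"
  have e: "e > 0" using ne unfolding e_def by simp
  have cF: "continuous_on W F" unfolding F_def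
    using smooth_cont[OF smooth_deriv[OF smooth_deriv[OF sm]]] .
  have cG: "continuous_on W G" unfolding G_def
    using smooth_cont[OF smooth_deriv[OF smooth_deriv[OF sm]]] .
  have oW: "open W" using smooth_open[OF sm] .
  obtain r1 where r1: "r1 > 0" "\<forall>q\<in>W. dist q p < r1 \<longrightarrow> dist (F q) (F p) < e"
    using cF p e unfolding continuous_on_iff by blast
  obtain r2 where r2: "r2 > 0" "\<forall>q\<in>W. dist q p < r2 \<longrightarrow> dist (G q) (G p) < e"
    using cG p e unfolding continuous_on_iff by blast
  obtain r3 where r3: "r3 > 0" "ball p r3 \<subseteq> W" using oW p open_contains_ball by blast
  define r where "r = min r1 (min r2 r3)"
  have r: "r > 0" "r \<le> r1" "r \<le> r2" "r \<le> r3" using r1 r2 r3 unfolding r_def by auto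
  define t where "t = r / (2 * (norm h + norm k + 1))"
  have pos: "0 < norm h + norm k + 1" by (smt (verit) norm_ge_zero)
  have t: "t > 0" unfolding t_def using r pos by simp
  have tb: "t * (norm h + norm k) < r"
  proof -
    have "t * (norm h + norm k) \<le> t * (norm h + norm k + 1)" using t by simp
    also have "\<dots> = r / 2" unfolding t_def using pos by (simp add: field_simps)
    finally show ?thesis using r by simp
  qed
  have near: "dist (p + s *\<^sub>R a + \<tau> *\<^sub>R b) p < r"
    if "0 \<le> s" "s \<le> t" "0 \<le> \<tau>" "\<tau> \<le> t" "norm a + norm b = norm h + norm k" for s \<tau> a b
  proof -
    have "dist (p + s *\<^sub>R a + \<tau> *\<^sub>R b) p = norm (s *\<^sub>R a + \<tau> *\<^sub>R b)" by (simp add: dist_norm)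
    also have "\<dots> \<le> s * norm a + \<tau> * norm b"
      using norm_triangle_ineq[of "s *\<^sub>R a" "\<tau> *\<^sub>R b"] that by simp
    also have "\<dots> \<le> t * norm a + t * norm b"
      using that by (intro add_mono mult_right_mono) auto
    also have "\<dots> = t * (norm h + norm k)" using that(5) by (metis distrib_left)
    finally show ?thesis using tb by linarith
  qed
  have inW: "p + s *\<^sub>R a + \<tau> *\<^sub>R b \<in> W"
    if "0 \<le> s" "s \<le> t" "0 \<le> \<tau>" "\<tau> \<le> t" "norm a + norm b = norm h + norm k" for s \<tau> a b
    using near[OF that] r r3 by (auto simp: dist_commute)
  obtain s1 \<tau>1 where st1: "0 < s1" "s1 < t" "0 < \<tau>1" "\<tau>1 < t"
    and E1: "w (p + t *\<^sub>R h + t *\<^sub>R k) - w (p + t *\<^sub>R h) - w (p + t *\<^sub>R k) + w p = t\<^sup>2 * F (p + s1 *\<^sub>R h + \<tau>1 *\<^sub>R k)"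
    unfolding F_def using mixed_mvt[OF sm t, of p h k] inW by blast
  obtain s2 \<tau>2 where st2: "0 < s2" "s2 < t" "0 < \<tau>2" "\<tau>2 < t"
    and E2: "w (p + t *\<^sub>R k + t *\<^sub>R h) - w (p + t *\<^sub>R k) - w (p + t *\<^sub>R h) + w p = t\<^sup>2 * G (p + s2 *\<^sub>R k + \<tau>2 *\<^sub>R h)"
    unfolding G_def using mixed_mvt[OF sm t, of p k h] inW by (metis add.commute)
  have "t\<^sup>2 * F (p + s1 *\<^sub>R h + \<tau>1 *\<^sub>R k) = t\<^sup>2 * G (p + s2 *\<^sub>R k + \<tau>2 *\<^sub>R h)"
    using E1 E2 by (simp add: algebra_simps)
  hence FG: "F (p + s1 *\<^sub>R h + \<tau>1 *\<^sub>R k) = G (p + s2 *\<^sub>R k + \<tau>2 *\<^sub>R h)" using t by simp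
  have d1: "dist (F (p + s1 *\<^sub>R h + \<tau>1 *\<^sub>R k)) (F p) < e"
    using r1(2) inW[of s1 \<tau>1 h k] near[of s1 \<tau>1 h k] st1 r by auto
  have d2: "dist (G (p + s2 *\<^sub>R k + \<tau>2 *\<^sub>R h)) (G p) < e"
    using r2(2) inW[of s2 \<tau>2 k h] near[of s2 \<tau>2 k h] st2 r by (auto simp: add.commute)
  have aux: "\<And>a b c d::real. \<bar>a - c\<bar> < \<bar>c - d\<bar> / 3 \<Longrightarrow> \<bar>b - d\<bar> < \<bar>c - d\<bar> / 3 \<Longrightarrow> a = b \<Longrightarrow> False"
    by (auto simp: abs_if split: if_splits)
  show False using aux[OF d1[unfolded e_def dist_real_def] d2[unfolded e_def dist_real_def] FG] .
qed

lemma lin_expand: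
  fixes f :: "'v::euclidean_space \<Rightarrow> real"
  assumes "linear f"
  shows "f v = (\<Sum>i\<in>Basis. (v \<bullet> i) * f i)"
proof -
  have "f v = f (\<Sum>i\<in>Basis. (v \<bullet> i) *\<^sub>R i)" by (simp add: euclidean_representation)
  also have "\<dots> = (\<Sum>i\<in>Basis. (v \<bullet> i) * f i)"
    by (simp add: linear_sum[OF assms] linear_cmul[OF assms])
  finally show ?thesis .
qed

lemma vd_chain:
  fixes f :: "'v::real_normed_vector \<Rightarrow> real"
  assumes "(g has_vector_derivative g') (at t)" "(f has_derivative f') (at (g t))"
  shows "((\<lambda>s. f (g s)) has_real_derivative f' g') (at t)"
proof -
  have l: "linear f'" using assms(2) has_derivative_linear by blast
  from has_derivative_compose[OF assms(1)[unfolded has_vector_derivative_def] assms(2)]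
  show ?thesis
    by (rule has_derivative_imp_has_field_derivative) (simp add: linear_cmul[OF l])
qed

lemma smooth_lin: "smooth_on W w \<Longrightarrow> q \<in> W \<Longrightarrow> linear (frechet_derivative w (at q))"
  using smooth_hasd has_derivative_linear by blast

lemma first_along:
  fixes w :: "'v::euclidean_space \<Rightarrow> real"
  assumes sm: "smooth_on W w" and g: "(g has_vector_derivative g') (at t)" and inW: "g t \<in> W"
  shows "DERIV (\<lambda>t. w (g t)) t :> (\<Sum>i\<in>Basis. (g' \<bullet> i) * frechet_derivative w (at (g t)) i)"
  using vd_chain[OF g smooth_hasd[OF sm inW]] lin_expand[OF smooth_lin[OF sm inW], of g'] by simp

lemma second_along:
  fixes w :: "'v::euclidean_space \<Rightarrow> real"
  assumes sm: "smooth_on W w" and g: "\<And>t. (g has_vector_derivative g' t) (at t)"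
    and g2: "(g' has_vector_derivative g2) (at 0)" and inW: "g 0 \<in> W"
  shows "DERIV (\<lambda>t. \<Sum>i\<in>Basis. (g' t \<bullet> i) * frechet_derivative w (at (g t)) i) 0 :>
     frechet_derivative w (at (g 0)) g2 + frechet_derivative (\<lambda>q. frechet_derivative w (at q) (g' 0)) (at (g 0)) (g' 0)"
proof -
  have d1: "DERIV (\<lambda>t. g' t \<bullet> i) 0 :> g2 \<bullet> i" for i
  proof -
    have "((\<lambda>t. g' t \<bullet> i) has_derivative (\<lambda>h. (h *\<^sub>R g2) \<bullet> i)) (at 0)"
      using bounded_linear.has_derivative[OF bounded_linear_inner_left g2[unfolded has_vector_derivative_def]] .
    thus ?thesis by (rule has_derivative_imp_has_field_derivative) simp
  qed
  have d2: "DERIV (\<lambda>t. frechet_derivative w (at (g t)) i) 0 :>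
      frechet_derivative (\<lambda>q. frechet_derivative w (at q) i) (at (g 0)) (g' 0)" for i
    using vd_chain[OF g smooth_hasd[OF smooth_deriv[OF sm] inW]] .
  have "DERIV (\<lambda>t. \<Sum>i\<in>Basis. (g' t \<bullet> i) * frechet_derivative w (at (g t)) i) 0 :>
     (\<Sum>i\<in>Basis. (g2 \<bullet> i) * frechet_derivative w (at (g 0)) i +
        (g' 0 \<bullet> i) * frechet_derivative (\<lambda>q. frechet_derivative w (at q) i) (at (g 0)) (g' 0))"
  proof (intro DERIV_sum)
    fix i show "DERIV (\<lambda>t. (g' t \<bullet> i) * frechet_derivative w (at (g t)) i) 0 :> (g2 \<bullet> i) * frechet_derivative w (at (g 0)) i +
        (g' 0 \<bullet> i) * frechet_derivative (\<lambda>q. frechet_derivative w (at q) i) (at (g 0)) (g' 0)"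
      using DERIV_mult'[OF d1[of i] d2[of i]] by (simp add: add.commute)
  qed
  moreover have "(\<Sum>i\<in>Basis. (g2 \<bullet> i) * frechet_derivative w (at (g 0)) i +
        (g' 0 \<bullet> i) * frechet_derivative (\<lambda>q. frechet_derivative w (at q) i) (at (g 0)) (g' 0))
      = frechet_derivative w (at (g 0)) g2 + frechet_derivative (\<lambda>q. frechet_derivative w (at q) (g' 0)) (at (g 0)) (g' 0)"
  proof -
    have "(\<Sum>i\<in>Basis. (g' 0 \<bullet> i) * frechet_derivative (\<lambda>q. frechet_derivative w (at q) i) (at (g 0)) (g' 0))
        = (\<Sum>i\<in>Basis. (g' 0 \<bullet> i) * frechet_derivative (\<lambda>q. frechet_derivative w (at q) (g' 0)) (at (g 0)) i)"
    proof (rule sum.cong[OF refl])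
      fix i show "(g' 0 \<bullet> i) * frechet_derivative (\<lambda>q. frechet_derivative w (at q) i) (at (g 0)) (g' 0) =
        (g' 0 \<bullet> i) * frechet_derivative (\<lambda>q. frechet_derivative w (at q) (g' 0)) (at (g 0)) i"
        by (rule arg_cong[where f="\<lambda>z. (g' 0 \<bullet> i) * z"]) (rule schwarz[OF sm inW])
    qed
    also have "\<dots> = frechet_derivative (\<lambda>q. frechet_derivative w (at q) (g' 0)) (at (g 0)) (g' 0)"
      by (rule lin_expand[OF smooth_lin[OF smooth_deriv[OF sm] inW], symmetric])
    finally have F: "(\<Sum>i\<in>Basis. (g' 0 \<bullet> i) * frechet_derivative (\<lambda>q. frechet_derivative w (at q) i) (at (g 0)) (g' 0))
       = frechet_derivative (\<lambda>q. frechet_derivative w (at q) (g' 0)) (at (g 0)) (g' 0)" .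
    have G: "(\<Sum>i\<in>Basis. (g2 \<bullet> i) * frechet_derivative w (at (g 0)) i) = frechet_derivative w (at (g 0)) g2"
      by (rule lin_expand[OF smooth_lin[OF sm inW], symmetric])
    show ?thesis unfolding sum.distrib F G ..
  qed
  ultimately show ?thesis by simp
qed

lemma second_test:
  fixes H H' :: "real \<Rightarrow> real"
  assumes d: "0 < d" and mx: "\<And>t. \<bar>t\<bar> < d \<Longrightarrow> H t \<le> H 0"
    and dH: "\<And>t. \<bar>t\<bar> < d \<Longrightarrow> DERIV H t :> H' t"
    and dH': "DERIV H' 0 :> L"
  shows "H' 0 = 0 \<and> L \<le> 0"
proof -
  have z: "H' 0 = 0"
    by (rule DERIV_local_max[OF dH[of 0] d]) (use d mx in \<open>auto\<close>)
  have "L \<le> 0"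
  proof (rule ccontr)
    assume "\<not> L \<le> 0" hence L: "0 < L" by simp
    obtain e where e: "e > 0" "\<And>h. h > 0 \<Longrightarrow> h < e \<Longrightarrow> H' 0 < H' (0 + h)"
      using DERIV_pos_inc_right[OF dH' L] by blast
    define h where "h = min e d / 2"
    have h: "0 < h" "h < e" "h < d" using e d unfolding h_def by auto
    have "\<And>x. 0 \<le> x \<Longrightarrow> x \<le> h \<Longrightarrow> DERIV H x :> H' x" using h by (intro dH) auto
    from MVT2[OF h(1) this] obtain z where zz: "0 < z" "z < h" "H h - H 0 = (h - 0) * H' z" by blast
    have "H' z > 0" using e(2)[of z] zz h z by simp
    hence "h * H' z > 0" using h by simp
    hence "H h > H 0" using zz by simp
    moreover have "H h \<le> H 0" using mx[of h] h by simp
    ultimately show False by simp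
  qed
  with z show ?thesis by simp
qed




definition rho :: "real \<Rightarrow> real \<Rightarrow> real" where
  "rho al t = inverse (sqrt (1 + al * t\<^sup>2))"

lemma rho_pos: "0 \<le> al \<Longrightarrow> rho al t > 0"
  unfolding rho_def by (simp add: add_pos_nonneg)

lemma rho_deriv: assumes "0 \<le> al"
  shows "DERIV (rho al) t :> - al * t * (rho al t)^3"
proof -
  have p: "0 < 1 + al * t\<^sup>2" using assms by (simp add: add_pos_nonneg)
  define q where "q = 1 + al * t\<^sup>2"
  have s: "sqrt q * sqrt q = q" using p unfolding q_def by simp
  have sp: "sqrt q > 0" using p unfolding q_def by simp
  have "DERIV (\<lambda>t. inverse (sqrt (1 + al * t\<^sup>2))) t :> - al * t * (inverse (sqrt q))^3"
    using p unfolding q_def[symmetric]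
    apply (auto intro!: derivative_eq_intros DERIV_real_sqrt simp: q_def[symmetric])
    using s sp by (simp add: power3_eq_cube field_simps)
  thus ?thesis unfolding rho_def q_def by simp
qed

definition cv :: "real \<Rightarrow> 'v::real_inner \<Rightarrow> 'v \<Rightarrow> real \<Rightarrow> 'v" where
  "cv al x a t = rho al t *\<^sub>R (x + t *\<^sub>R a)"
definition cv' :: "real \<Rightarrow> 'v::real_inner \<Rightarrow> 'v \<Rightarrow> real \<Rightarrow> 'v" where
  "cv' al x a t = (- al * t * (rho al t)^3) *\<^sub>R (x + t *\<^sub>R a) + rho al t *\<^sub>R a"

lemma rho0: "rho al 0 = 1" by (simp add: rho_def)

lemma cv0: "cv al x a 0 = x" and cv'0: "cv' al x a 0 = a"
  by (simp_all add: cv_def cv'_def rho0)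

lemma cv_norm:
  assumes "norm x = 1" "x \<bullet> a = 0" "al = (norm a)\<^sup>2"
  shows "norm (cv al x a t) = 1"
proof -
  have "(norm (x + t *\<^sub>R a))\<^sup>2 = (x + t *\<^sub>R a) \<bullet> (x + t *\<^sub>R a)" by (simp only: power2_norm_eq_inner)
  also have "\<dots> = x \<bullet> x + 2 * t * (x \<bullet> a) + t\<^sup>2 * (a \<bullet> a)"
    by (simp add: inner_add_left inner_add_right inner_commute algebra_simps power2_eq_square)
  also have "\<dots> = 1 + al * t\<^sup>2" using assms by (simp add: power2_norm_eq_inner[symmetric])
  finally have "(norm (x + t *\<^sub>R a))\<^sup>2 = 1 + al * t\<^sup>2" .
  hence n: "norm (x + t *\<^sub>R a) = sqrt (1 + al * t\<^sup>2)" by (metis norm_ge_zero real_sqrt_unique)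
  have "0 < 1 + al * t\<^sup>2" using assms by (simp add: add_pos_nonneg)
  thus ?thesis unfolding cv_def rho_def using n by simp
qed

lemma cv_deriv:
  assumes "0 \<le> al"
  shows "(cv al x a has_vector_derivative cv' al x a t) (at t)"
  unfolding cv_def[abs_def] cv'_def
  using rho_deriv[OF assms]
  by (auto intro!: derivative_eq_intros simp: algebra_simps)

lemma cv'_deriv:
  assumes "0 \<le> al"
  shows "(cv' al x a has_vector_derivative (- al) *\<^sub>R x) (at 0)"
  unfolding cv'_def[abs_def]
  using rho_deriv[OF assms]
  by (auto intro!: derivative_eq_intros simp: algebra_simps rho0)




definition gam :: "(real^'a) \<times> (real^'b) \<Rightarrow> (real^'a) \<times> (real^'b) \<Rightarrow> real \<Rightarrow> (real^'a) \<times> (real^'b)" where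
  "gam p X t = (cv ((norm (fst X))\<^sup>2) (fst p) (fst X) t, cv ((norm (snd X))\<^sup>2) (snd p) (snd X) t)"
definition gam' :: "(real^'a) \<times> (real^'b) \<Rightarrow> (real^'a) \<times> (real^'b) \<Rightarrow> real \<Rightarrow> (real^'a) \<times> (real^'b)" where
  "gam' p X t = (cv' ((norm (fst X))\<^sup>2) (fst p) (fst X) t, cv' ((norm (snd X))\<^sup>2) (snd p) (snd X) t)"
definition gam2 :: "(real^'a) \<times> (real^'b) \<Rightarrow> (real^'a) \<times> (real^'b) \<Rightarrow> (real^'a) \<times> (real^'b)" where
  "gam2 p X = ((- (norm (fst X))\<^sup>2) *\<^sub>R fst p, (- (norm (snd X))\<^sup>2) *\<^sub>R snd p)"

lemma gam0: "gam p X 0 = p" and gam'0: "gam' p X 0 = X"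
  by (simp_all add: gam_def gam'_def cv0 cv'0)

lemma gam_sphere:
  assumes "p \<in> sphere_prod" "X \<in> tangent p"
  shows "gam p X t \<in> sphere_prod"
  using assms unfolding sphere_prod_def tangent_def gam_def
  by (auto intro!: cv_norm simp: inner_commute)

lemma gam_deriv: "(gam p X has_vector_derivative gam' p X t) (at t)"
  unfolding gam_def[abs_def] gam'_def
  by (intro has_vector_derivative_Pair cv_deriv) auto

lemma gam'_deriv: "(gam' p X has_vector_derivative gam2 p X) (at 0)"
  unfolding gam'_def[abs_def] gam2_def
  by (intro has_vector_derivative_Pair cv'_deriv) auto

lemma D1_eq: "D1 w q = frechet_derivative w (at q)"
  by (rule ext) (simp add: D1_def)

lemma D1_lin: "smooth_on W w \<Longrightarrow> q \<in> W \<Longrightarrow> linear (D1 w q)"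
  unfolding D1_eq by (rule smooth_lin)

lemma amb_x: assumes "smooth_on W w" "q \<in> W"
  shows "c \<bullet> amb_grad_x w q = D1 w q (c, 0)"
proof -
  have L: "linear (D1 w q)" using D1_lin[OF assms] .
  have l: "linear (\<lambda>c. D1 w q (c, 0))"
  proof (rule linearI)
    fix x y show "D1 w q ((x + y), 0) = D1 w q (x, 0) + D1 w q (y, 0)"
      using linear_add[OF L, of "(x, 0)" "(y, 0)"] by simp
  next
    fix r :: real and b show "D1 w q ((r *\<^sub>R b), 0) = r *\<^sub>R D1 w q (b, 0)"
      using linear_cmul[OF L, of r "(b, 0)"] by simp
  qed
  have "c \<bullet> amb_grad_x w q = (\<Sum>i\<in>Basis. (c \<bullet> i) * D1 w q (i, 0))"
    unfolding amb_grad_x_def inner_sum_right by (simp add: mult.commute)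
  also have "\<dots> = D1 w q (c, 0)" by (rule lin_expand[OF l, symmetric])
  finally show ?thesis .
qed

lemma amb_y: assumes "smooth_on W w" "q \<in> W"
  shows "c \<bullet> amb_grad_y w q = D1 w q (0, c)"
proof -
  have L: "linear (D1 w q)" using D1_lin[OF assms] .
  have l: "linear (\<lambda>c. D1 w q (0, c))"
  proof (rule linearI)
    fix x y show "D1 w q (0, (x + y)) = D1 w q (0, x) + D1 w q (0, y)"
      using linear_add[OF L, of "(0, x)" "(0, y)"] by simp
  next
    fix r :: real and b show "D1 w q (0, (r *\<^sub>R b)) = r *\<^sub>R D1 w q (0, b)"
      using linear_cmul[OF L, of r "(0, b)"] by simp
  qed
  have "c \<bullet> amb_grad_y w q = (\<Sum>i\<in>Basis. (c \<bullet> i) * D1 w q (0, i))"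
    unfolding amb_grad_y_def inner_sum_right by (simp add: mult.commute)
  also have "\<dots> = D1 w q (0, c)" by (rule lin_expand[OF l, symmetric])
  finally show ?thesis .
qed

lemma hess_curve:
  assumes sm: "smooth_on W w" and p: "p \<in> W"
  shows "D1 w p (gam2 p X) + D2 w p X X = hess w p X X"
proof -
  have l: "linear (D1 w p)" using D1_lin[OF sm p] .
  have "gam2 p X = (- (norm (fst X))\<^sup>2) *\<^sub>R (fst p, 0) + (- (norm (snd X))\<^sup>2) *\<^sub>R (0, snd p)"
    unfolding gam2_def by simp
  hence "D1 w p (gam2 p X) = (- (norm (fst X))\<^sup>2) * D1 w p (fst p, 0) + (- (norm (snd X))\<^sup>2) * D1 w p (0, snd p)"
    by (simp only: linear_add[OF l] linear_cmul[OF l] real_scaleR_def)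
  thus ?thesis unfolding hess_def amb_x[OF sm p] amb_y[OF sm p]
    by (simp add: power2_norm_eq_inner)
qed

lemma max_point:
  fixes u v :: "(real^'a) \<times> (real^'b) \<Rightarrow> real"
  assumes smu: "smooth_on U u" and smv: "smooth_on V v" and pU: "p \<in> U" and pV: "p \<in> V"
    and ps: "p \<in> sphere_prod" and X: "X \<in> tangent p" and T: "open T" and pT: "p \<in> T"
    and mx: "\<And>q. q \<in> T \<Longrightarrow> q \<in> sphere_prod \<Longrightarrow> v q - u q \<le> v p - u p"
  shows "D1 v p X = D1 u p X \<and> hess v p X X \<le> hess u p X X"
proof -
  define W where "W = T \<inter> U \<inter> V"
  have oW: "open W" unfolding W_def using T smooth_open[OF smu] smooth_open[OF smv] by auto
  have pW: "p \<in> W" unfolding W_def using pT pU pV by auto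
  obtain e where e: "e > 0" "ball p e \<subseteq> W" using oW pW open_contains_ball by blast
  have "continuous (at 0) (gam p X)" using has_vector_derivative_continuous[OF gam_deriv] .
  then obtain d where d: "d > 0" "\<And>t. dist t 0 < d \<Longrightarrow> dist (gam p X t) (gam p X 0) < e"
    unfolding continuous_at_eps_delta using e by blast
  have inW: "gam p X t \<in> W" if "\<bar>t\<bar> < d" for t
    using d(2)[of t] that e(2) unfolding gam0 by (auto simp: dist_commute)
  define H where "H t = v (gam p X t) - u (gam p X t)" for t
  define Hv where "Hv t = (\<Sum>i\<in>Basis. (gam' p X t \<bullet> i) * frechet_derivative v (at (gam p X t)) i)" for t
  define Hu where "Hu t = (\<Sum>i\<in>Basis. (gam' p X t \<bullet> i) * frechet_derivative u (at (gam p X t)) i)" for t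
  have dv2: "DERIV Hv 0 :> frechet_derivative v (at p) (gam2 p X) + frechet_derivative (\<lambda>q. frechet_derivative v (at q) X) (at p) X"
    using second_along[OF smv gam_deriv gam'_deriv, of p X] pV unfolding Hv_def[abs_def] gam0 gam'0 by simp
  have du2: "DERIV Hu 0 :> frechet_derivative u (at p) (gam2 p X) + frechet_derivative (\<lambda>q. frechet_derivative u (at q) X) (at p) X"
    using second_along[OF smu gam_deriv gam'_deriv, of p X] pU unfolding Hu_def[abs_def] gam0 gam'0 by simp
  have dd: "DERIV (\<lambda>t. Hv t - Hu t) 0 :> (frechet_derivative v (at p) (gam2 p X) + frechet_derivative (\<lambda>q. frechet_derivative v (at q) X) (at p) X)
     - (frechet_derivative u (at p) (gam2 p X) + frechet_derivative (\<lambda>q. frechet_derivative u (at q) X) (at p) X)"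
    by (rule DERIV_diff[OF dv2 du2])
  have T: "Hv 0 - Hu 0 = 0 \<and> (frechet_derivative v (at p) (gam2 p X) + frechet_derivative (\<lambda>q. frechet_derivative v (at q) X) (at p) X)
     - (frechet_derivative u (at p) (gam2 p X) + frechet_derivative (\<lambda>q. frechet_derivative u (at q) X) (at p) X) \<le> 0"
  proof (rule second_test[OF d(1), of H])
    fix t :: real assume t: "\<bar>t\<bar> < d"
    show "H t \<le> H 0" unfolding H_def gam0
      using mx[of "gam p X t"] inW[OF t] gam_sphere[OF ps X] unfolding W_def by auto
    show "DERIV H t :> Hv t - Hu t" unfolding H_def Hv_def Hu_def
      using inW[OF t] unfolding W_def
      by (intro DERIV_diff first_along[OF smv gam_deriv] first_along[OF smu gam_deriv]) auto
  qed (rule dd)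
  have "Hv 0 = D1 v p X" unfolding Hv_def gam0 gam'0 D1_def
    by (rule lin_expand[OF smooth_lin[OF smv pV], symmetric])
  moreover have "Hu 0 = D1 u p X" unfolding Hu_def gam0 gam'0 D1_def
    by (rule lin_expand[OF smooth_lin[OF smu pU], symmetric])
  moreover have "hess v p X X = frechet_derivative v (at p) (gam2 p X) + frechet_derivative (\<lambda>q. frechet_derivative v (at q) X) (at p) X"
    using hess_curve[OF smv pV, of X] unfolding D1_def D2_def by simp
  moreover have "hess u p X X = frechet_derivative u (at p) (gam2 p X) + frechet_derivative (\<lambda>q. frechet_derivative u (at q) X) (at p) X"
    using hess_curve[OF smu pU, of X] unfolding D1_def D2_def by simp
  ultimately show ?thesis using T by simp
qed

lemma grad_x_inner: assumes "smooth_on W w" "q \<in> W"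
  shows "grad_x w q \<bullet> c = D1 w q (c, 0) - D1 w q (fst q, 0) * (fst q \<bullet> c)"
proof -
  have "grad_x w q \<bullet> c = amb_grad_x w q \<bullet> c - (amb_grad_x w q \<bullet> fst q) * (fst q \<bullet> c)"
    unfolding grad_x_def by (simp add: inner_diff_left)
  thus ?thesis using amb_x[OF assms, of c] amb_x[OF assms, of "fst q"] by (simp add: inner_commute)
qed

lemma grad_y_inner: assumes "smooth_on W w" "q \<in> W"
  shows "grad_y w q \<bullet> c = D1 w q (0, c) - D1 w q (0, snd q) * (snd q \<bullet> c)"
proof -
  have "grad_y w q \<bullet> c = amb_grad_y w q \<bullet> c - (amb_grad_y w q \<bullet> snd q) * (snd q \<bullet> c)"
    unfolding grad_y_def by (simp add: inner_diff_left)
  thus ?thesis using amb_y[OF assms, of c] amb_y[OF assms, of "snd q"] by (simp add: inner_commute)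
qed

lemma grads_eq:
  assumes smu: "smooth_on U u" and smv: "smooth_on V v" and pU: "p \<in> U" and pV: "p \<in> V"
    and ps: "p \<in> sphere_prod" and eq: "\<And>X. X \<in> tangent p \<Longrightarrow> D1 v p X = D1 u p X"
  shows "grad_x v p = grad_x u p \<and> grad_y v p = grad_y u p"
proof
  have nx: "fst p \<bullet> fst p = 1" and ny: "snd p \<bullet> snd p = 1"
    using ps unfolding sphere_prod_def by (auto simp: power2_norm_eq_inner[symmetric] mem_sphere_0 dot_square_norm)
  define z where "z = grad_x v p - grad_x u p"
  have zx: "fst p \<bullet> z = 0" unfolding z_def inner_diff_right
    using grad_x_inner[OF smv pV, of "fst p"] grad_x_inner[OF smu pU, of "fst p"] nx
    by (simp add: inner_commute)
  have "(z, 0) \<in> tangent p" unfolding tangent_def using zx by (simp add: inner_commute)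
  hence "z \<bullet> z = 0" using eq[of "(z,0)"]
    using grad_x_inner[OF smv pV, of z] grad_x_inner[OF smu pU, of z] zx
    unfolding z_def by (simp add: inner_diff_left)
  thus "grad_x v p = grad_x u p" unfolding z_def by simp
  define z' where "z' = grad_y v p - grad_y u p"
  have zy: "snd p \<bullet> z' = 0" unfolding z'_def inner_diff_right
    using grad_y_inner[OF smv pV, of "snd p"] grad_y_inner[OF smu pU, of "snd p"] ny
    by (simp add: inner_commute)
  have "(0, z') \<in> tangent p" unfolding tangent_def using zy by (simp add: inner_commute)
  hence "z' \<bullet> z' = 0" using eq[of "(0,z')"]
    using grad_y_inner[OF smv pV, of z'] grad_y_inner[OF smu pU, of z'] zy
    unfolding z'_def by (simp add: inner_diff_left)
  thus "grad_y v p = grad_y u p" unfolding z'_def by simp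
qed

lemma D2_sym: assumes "smooth_on W w" "p \<in> W" shows "D2 w p X Y = D2 w p Y X"
  unfolding D2_def D1_def by (rule schwarz[OF assms])

lemma D2_eq: "D2 w p X = frechet_derivative (\<lambda>q. frechet_derivative w (at q) X) (at p)"
  by (rule ext) (simp add: D2_def D1_def)

lemma D2_lin: "smooth_on W w \<Longrightarrow> p \<in> W \<Longrightarrow> linear (D2 w p X)"
  unfolding D2_eq by (rule smooth_lin[OF smooth_deriv])

lemma Mform_sym: "smooth_on W w \<Longrightarrow> p \<in> W \<Longrightarrow> Mform w p X Y = Mform w p Y X"
  unfolding Mform_def hess_def using D2_sym[of W w p X Y] by (simp add: inner_commute mult.commute)

lemma Mform_lin: assumes "smooth_on W w" "p \<in> W" shows "linear (Mform w p X)"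
proof -
  have l: "linear (D2 w p X)" using D2_lin[OF assms] .
  show ?thesis
  proof (rule linearI)
    fix y z show "Mform w p X (y + z) = Mform w p X y + Mform w p X z"
      unfolding Mform_def hess_def linear_add[OF l]
      by (simp add: inner_add_right algebra_simps)
  next
    fix r :: real and y show "Mform w p X (r *\<^sub>R y) = r *\<^sub>R Mform w p X y"
      unfolding Mform_def hess_def linear_cmul[OF l]
      by (simp add: algebra_simps)
  qed
qed

lemma tangent_subspace: "subspace (tangent p)"
  unfolding tangent_def subspace_def by (auto simp: inner_add_left zero_prod_def)

lemma tangent_dim:
  fixes p :: "(real^'a) \<times> (real^'b)"
  assumes ps: "p \<in> sphere_prod"
  shows "dim (tangent p) = tdim TYPE('a \<times> 'b)"
proof -
  define x where "x = fst p" define y where "y = snd p"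
  have nx: "norm x = 1" and ny: "norm y = 1" using ps unfolding sphere_prod_def x_def y_def by auto
  define N where "N = {(x, 0::real^'b), (0::real^'a, y)}"
  have x0: "x \<noteq> 0" using nx by auto
  have y0: "y \<noteq> 0" using ny by auto
  have indN: "independent N"
    by (rule pairwise_orthogonal_independent) (use x0 y0 in \<open>auto simp: N_def pairwise_def orthogonal_def zero_prod_def\<close>)
  have cN: "card N = 2" unfolding N_def using x0 by auto
  have dN: "dim (span N) = 2" using dim_eq_card_independent[OF indN] cN by simp
  have T: "{z \<in> UNIV. \<forall>n \<in> span N. orthogonal n z} = tangent p"
  proof -
    have "{z \<in> UNIV. \<forall>n \<in> span N. orthogonal n z} = {z. \<forall>n \<in> N. orthogonal n z}"
    proof (intro Set.set_eqI HOL.iffI)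
      fix z assume "z \<in> {z \<in> UNIV. \<forall>n \<in> span N. orthogonal n z}"
      thus "z \<in> {z. \<forall>n \<in> N. orthogonal n z}" using span_base[of _ N] by auto
    next
      fix z assume A: "z \<in> {z. \<forall>n \<in> N. orthogonal n z}"
      have "orthogonal n z" if n: "n \<in> span N" for n
      proof -
        have "orthogonal z n"
          by (rule orthogonal_to_span[OF n]) (use A in \<open>auto simp: orthogonal_commute\<close>)
        thus ?thesis by (simp add: orthogonal_commute)
      qed
      thus "z \<in> {z \<in> UNIV. \<forall>n \<in> span N. orthogonal n z}" by auto
    qed
    also have "\<dots> = tangent p"
      unfolding N_def tangent_def x_def y_def orthogonal_def by (auto simp: inner_commute)
    finally show ?thesis .
  qed
  have "dim (tangent p) + dim (span N) = dim (UNIV :: ((real^'a) \<times> (real^'b)) set)"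
    using dim_subspace_orthogonal_to_vectors[of "span N" UNIV] unfolding T by auto
  thus ?thesis unfolding dN tdim_def by simp
qed

lemma frame_exists:
  fixes p :: "(real^'a) \<times> (real^'b)"
  assumes ps: "p \<in> sphere_prod"
  shows "is_onframe p (SOME e. is_onframe p e)"
proof -
  obtain B where B: "B \<subseteq> tangent p" "pairwise orthogonal B" "\<And>x. x \<in> B \<Longrightarrow> norm x = 1"
     "independent B" "card B = dim (tangent p)" "span B = tangent p"
    using orthonormal_basis_subspace[OF tangent_subspace] by blast
  have fB: "finite B" using B(4) independent_imp_finite by blast
  define d where "d = tdim TYPE('a \<times> 'b)"
  have cB: "card B = d" using B(5) tangent_dim[OF ps] unfolding d_def by simp
  obtain e where e: "bij_betw e {0..<d} B" using ex_bij_betw_nat_finite[OF fB] cB by auto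
  have img: "e ` {..<d} = B" using e unfolding bij_betw_def by (simp add: atLeast0LessThan)
  have inj: "inj_on e {..<d}" using e unfolding bij_betw_def by (simp add: atLeast0LessThan)
  have "is_onframe p e"
    unfolding is_onframe_def d_def[symmetric]
  proof (intro conjI allI impI)
    fix i assume "i < d" thus "e i \<in> tangent p" using img B(1) by auto
  next
    fix i j assume i: "i < d" and j: "j < d"
    show "e i \<bullet> e j = (if i = j then 1 else 0)"
    proof (cases "i = j")
      case True
      have "e i \<in> B" using img i by auto
      hence "norm (e i) = 1" using B(3) by blast
      thus ?thesis using True by (simp add: dot_square_norm)
    next
      case False
      hence "e i \<noteq> e j" using inj i j unfolding inj_on_def by auto
      moreover have "e i \<in> B" "e j \<in> B" using img i j by auto
      ultimately show ?thesis using B(2) False unfolding pairwise_def orthogonal_def by auto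
    qed
  next
    show "span (e ` {..<d}) = tangent p" using img B(6) by simp
  qed
  thus ?thesis by (rule someI[where P="is_onframe p"])
qed




definition detF :: "nat \<Rightarrow> (nat \<Rightarrow> nat \<Rightarrow> real) \<Rightarrow> real" where
  "detF n A = (\<Sum>\<sigma> | \<sigma> permutes {..<n}. of_int (sign \<sigma>) * (\<Prod>i<n. A i (\<sigma> i)))"

lemma detF_mat: "detF n A = Determinant.det (Matrix.mat n n (\<lambda>(i,j). A i j))"
proof -
  have "Determinant.det (Matrix.mat n n (\<lambda>(i,j). A i j)) =
     (\<Sum>p | p permutes {0..<n}. of_int (sign p) * (\<Prod>i = 0..<n. Matrix.mat n n (\<lambda>(i,j). A i j) $$ (i, p i)))"
    by (rule det_def') simp
  also have "\<dots> = detF n A" unfolding detF_def atLeast0LessThan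
  proof (rule sum.cong[OF refl])
    fix p assume "p \<in> {p. p permutes {..<n}}"
    hence p: "p permutes {..<n}" by simp
    show "of_int (sign p) * (\<Prod>i<n. Matrix.mat n n (\<lambda>(i,j). A i j) $$ (i, p i)) = of_int (sign p) * (\<Prod>i<n. A i (p i))"
      using permutes_in_image[OF p] by (intro arg_cong[where f="\<lambda>x. _ * x"] prod.cong) auto
  qed
  finally show ?thesis by simp
qed

definition schur :: "(nat \<Rightarrow> nat \<Rightarrow> real) \<Rightarrow> nat \<Rightarrow> nat \<Rightarrow> real" where
  "schur A i j = A (Suc i) (Suc j) - A (Suc i) 0 * A 0 (Suc j) / A 0 0"

lemma detF_schur:
  assumes a: "A 0 0 \<noteq> 0"
  shows "detF (Suc n) A = A 0 0 * detF n (schur A)"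
proof -
  define M where "M = Matrix.mat (Suc n) (Suc n) (\<lambda>(i,j). A i j)"
  define E where "E = Matrix.mat (Suc n) (Suc n) (\<lambda>(i,j). if i = j then 1 else if j = 0 then - A i 0 / A 0 0 else (0::real))"
  have M: "M \<in> carrier_mat (Suc n) (Suc n)" and E: "E \<in> carrier_mat (Suc n) (Suc n)"
    unfolding M_def E_def by auto
  have dE: "Determinant.det E = 1"
  proof -
    have "Determinant.det E = prod_list (diag_mat E)"
      by (rule det_lower_triangular[OF _ E]) (auto simp: E_def)
    also have "\<dots> = 1" unfolding prod_list_diag_prod using E
      by (intro prod.neutral) (auto simp: E_def)
    finally show ?thesis .
  qed
  have EM: "E * M = four_block_mat (Matrix.mat 1 1 (\<lambda>_. A 0 0)) (Matrix.mat 1 n (\<lambda>(_,j). A 0 (Suc j)))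
             (0\<^sub>m n 1) (Matrix.mat n n (\<lambda>(i,j). schur A i j))" (is "_ = ?R")
  proof (rule eq_matI)
    fix i j assume i: "i < dim_row ?R" and j: "j < dim_col ?R"
    hence i': "i < Suc n" and j': "j < Suc n" by auto
    have "(E * M) $$ (i,j) = (\<Sum>k\<in>{0..<Suc n}. E $$ (i,k) * M $$ (k,j))"
      using i' j' E M by (simp add: scalar_prod_def)
    also have "\<dots> = (\<Sum>k\<in>{0..<Suc n}. (if i = k then A i j else 0) + (if k = 0 \<and> i \<noteq> 0 then - A i 0 / A 0 0 * A 0 j else 0))"
      using i' j' by (intro sum.cong) (auto simp: E_def M_def)
    also have "\<dots> = A i j + (if i \<noteq> 0 then - A i 0 / A 0 0 * A 0 j else 0)"
      using i' by (simp add: sum.distrib)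
    finally have e: "(E * M) $$ (i,j) = A i j + (if i \<noteq> 0 then - A i 0 / A 0 0 * A 0 j else 0)" .
    show "(E * M) $$ (i,j) = ?R $$ (i,j)"
      unfolding e using i' j' a
      by (cases i; cases j) (auto simp: four_block_mat_def schur_def Let_def field_simps)
  qed (use E M in auto)
  have "detF (Suc n) A = Determinant.det M" unfolding M_def detF_mat ..
  also have "\<dots> = Determinant.det (E * M)" using det_mult[OF E M] dE by simp
  also have "\<dots> = Determinant.det (Matrix.mat 1 1 (\<lambda>_. A 0 0)) * Determinant.det (Matrix.mat n n (\<lambda>(i,j). schur A i j))"
    unfolding EM by (rule det_four_block_mat_lower_left_zero_col) auto
  also have "Determinant.det (Matrix.mat 1 1 (\<lambda>_. A 0 0)) = A 0 0"
  proof -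
    have "Determinant.det (Matrix.mat 1 1 (\<lambda>_. A 0 0)) = prod_list (diag_mat (Matrix.mat 1 1 (\<lambda>_. A 0 0)))"
      by (rule det_lower_triangular[of 1]) auto
    thus ?thesis by (simp add: prod_list_diag_prod)
  qed
  finally show ?thesis by (simp add: detF_mat)
qed

definition Qf :: "nat \<Rightarrow> (nat \<Rightarrow> nat \<Rightarrow> real) \<Rightarrow> (nat \<Rightarrow> real) \<Rightarrow> real" where
  "Qf n A x = (\<Sum>i<n. \<Sum>j<n. x i * A i j * x j)"

definition Lf :: "nat \<Rightarrow> (nat \<Rightarrow> nat \<Rightarrow> real) \<Rightarrow> (nat \<Rightarrow> real) \<Rightarrow> real" where
  "Lf n A y = (\<Sum>j<n. A 0 (Suc j) * y j)"

lemma Qf_Suc: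
  assumes sym: "\<And>i j. i < Suc n \<Longrightarrow> j < Suc n \<Longrightarrow> A i j = A j i"
  shows "Qf (Suc n) A (case_nat t y) = A 0 0 * t\<^sup>2 + 2 * t * Lf n A y + Qf n (\<lambda>i j. A (Suc i) (Suc j)) y"
proof -
  have s: "(\<Sum>i<n. y i * A (Suc i) 0 * t) = t * Lf n A y"
    unfolding Lf_def sum_distrib_left
    by (intro sum.cong refl) (use sym in \<open>auto simp: mult_ac\<close>)
  have s2: "(\<Sum>j<n. t * A 0 (Suc j) * y j) = t * Lf n A y"
    unfolding Lf_def sum_distrib_left by (simp add: mult_ac)
  have s3: "(\<Sum>i<n. t * (y i * A 0 (Suc i))) = t * Lf n A y"
    unfolding Lf_def sum_distrib_left by (simp add: mult_ac)
  have s4: "(\<Sum>i<n. t * (y i * A (Suc i) 0)) = t * Lf n A y"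
    unfolding Lf_def sum_distrib_left by (intro sum.cong refl) (use sym in \<open>auto simp: mult_ac\<close>)
  show ?thesis
    unfolding Qf_def sum.lessThan_Suc_shift
    by (simp add: sum.distrib s s2 power2_eq_square algebra_simps s3 s4)
qed

lemma Qf_schur:
  assumes sym: "\<And>i j. i < Suc n \<Longrightarrow> j < Suc n \<Longrightarrow> A i j = A j i"
  shows "Qf n (schur A) y = Qf n (\<lambda>i j. A (Suc i) (Suc j)) y - (Lf n A y)\<^sup>2 / A 0 0"
proof -
  have "Qf n (schur A) y = Qf n (\<lambda>i j. A (Suc i) (Suc j)) y - (\<Sum>i<n. \<Sum>j<n. (y i * A (Suc i) 0) * (A 0 (Suc j) * y j) / A 0 0)"
    unfolding Qf_def schur_def by (simp add: algebra_simps sum_subtractf diff_divide_distrib)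
  also have "(\<Sum>i<n. \<Sum>j<n. (y i * A (Suc i) 0) * (A 0 (Suc j) * y j) / A 0 0) = (\<Sum>i<n. y i * A (Suc i) 0) * (\<Sum>j<n. A 0 (Suc j) * y j) / A 0 0"
    by (simp add: sum_product sum_divide_distrib)
  also have "(\<Sum>i<n. y i * A (Suc i) 0) = Lf n A y"
    unfolding Lf_def by (intro sum.cong refl) (use sym in \<open>auto simp: mult_ac\<close>)
  finally show ?thesis by (simp add: Lf_def power2_eq_square)
qed

lemma detF_mono:
  "\<And>A B. (\<And>i j. i < n \<Longrightarrow> j < n \<Longrightarrow> A i j = A j i) \<Longrightarrow> (\<And>i j. i < n \<Longrightarrow> j < n \<Longrightarrow> B i j = B j i)
   \<Longrightarrow> (\<And>x. (\<exists>i<n. x i \<noteq> 0) \<Longrightarrow> 0 < Qf n A x) \<Longrightarrow> (\<And>x. Qf n A x \<le> Qf n B x)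
   \<Longrightarrow> 0 < detF n A \<and> detF n A \<le> detF n B"
proof (induction n)
  case 0
  then show ?case by (simp add: detF_def)
next
  case (Suc n)
  note symA = Suc.prems(1) and symB = Suc.prems(2) and pd = Suc.prems(3) and le = Suc.prems(4)
  have QA: "\<And>t y. Qf (Suc n) A (case_nat t y) = A 0 0 * t\<^sup>2 + 2 * t * Lf n A y + Qf n (\<lambda>i j. A (Suc i) (Suc j)) y"
    using Qf_Suc symA by blast
  have QB: "\<And>t y. Qf (Suc n) B (case_nat t y) = B 0 0 * t\<^sup>2 + 2 * t * Lf n B y + Qf n (\<lambda>i j. B (Suc i) (Suc j)) y"
    using Qf_Suc symB by blast
  have z1: "Qf n C (\<lambda>_. 0) = 0" "Lf n C (\<lambda>_. 0) = 0" for C by (simp_all add: Qf_def Lf_def)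
  have e1: "Qf (Suc n) A (case_nat 1 (\<lambda>_. 0)) = A 0 0" "Qf (Suc n) B (case_nat 1 (\<lambda>_. 0)) = B 0 0"
    unfolding QA QB z1 by simp_all
  have a: "0 < A 0 0"
  proof -
    have "\<exists>i<Suc n. case_nat (1::real) (\<lambda>_. 0) i \<noteq> 0" by (intro exI[of _ 0]) simp
    from pd[OF this] show ?thesis unfolding e1 .
  qed
  have ab: "A 0 0 \<le> B 0 0"
    using le[of "case_nat 1 (\<lambda>_. 0)"] unfolding e1 .
  have b: "0 < B 0 0" using a ab by linarith
  have SA: "Qf n (schur A) y = Qf n (\<lambda>i j. A (Suc i) (Suc j)) y - (Lf n A y)\<^sup>2 / A 0 0" for y
    using Qf_schur symA by blast
  have SB: "Qf n (schur B) y = Qf n (\<lambda>i j. B (Suc i) (Suc j)) y - (Lf n B y)\<^sup>2 / B 0 0" for y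
    using Qf_schur symB by blast
  have sqA: "Qf n (schur A) y \<le> Qf (Suc n) A (case_nat t y)" for t y
  proof -
    have "0 \<le> (A 0 0 * t + Lf n A y)\<^sup>2 / A 0 0" using a by simp
    also have "\<dots> = A 0 0 * t\<^sup>2 + 2 * t * Lf n A y + (Lf n A y)\<^sup>2 / A 0 0"
      using a by (simp add: power2_eq_square field_simps)
    finally show ?thesis unfolding QA SA by simp
  qed
  have eqA: "Qf n (schur A) y = Qf (Suc n) A (case_nat (- Lf n A y / A 0 0) y)" for y
    unfolding QA SA using a by (simp add: power2_eq_square field_simps)
  have eqB: "Qf n (schur B) y = Qf (Suc n) B (case_nat (- Lf n B y / B 0 0) y)" for y
    unfolding QB SB using b by (simp add: power2_eq_square field_simps)
  have IH: "0 < detF n (schur A) \<and> detF n (schur A) \<le> detF n (schur B)"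
  proof (rule Suc.IH)
    fix i j assume "i < n" "j < n" thus "schur A i j = schur A j i"
      unfolding schur_def using symA[of "Suc i" "Suc j"] symA[of 0 "Suc j"] symA[of "Suc i" 0]
      by (simp add: mult.commute)
  next
    fix i j assume "i < n" "j < n" thus "schur B i j = schur B j i"
      unfolding schur_def using symB[of "Suc i" "Suc j"] symB[of 0 "Suc j"] symB[of "Suc i" 0]
      by (simp add: mult.commute)
  next
    fix y :: "nat \<Rightarrow> real" assume "\<exists>i<n. y i \<noteq> 0"
    then obtain i where "i < n" "y i \<noteq> 0" by blast
    hence "\<exists>k<Suc n. case_nat (- Lf n A y / A 0 0) y k \<noteq> 0"
      by (intro exI[of _ "Suc i"]) auto
    thus "0 < Qf n (schur A) y" unfolding eqA by (rule pd)
  next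
    fix y
    show "Qf n (schur A) y \<le> Qf n (schur B) y"
      using sqA[of y "- Lf n B y / B 0 0"] le[of "case_nat (- Lf n B y / B 0 0) y"] eqB[of y] by linarith
  qed
  have dA: "detF (Suc n) A = A 0 0 * detF n (schur A)" using a by (intro detF_schur) simp
  have dB: "detF (Suc n) B = B 0 0 * detF n (schur B)" using b by (intro detF_schur) simp
  show ?case unfolding dA dB using IH a ab
    by (auto intro!: mult_mono mult_pos_pos)
qed




lemma detM_detF: "detM w p = detF (tdim TYPE('a \<times> 'b))
   (\<lambda>i j. Mform w p ((SOME e. is_onframe p e) i) ((SOME e. is_onframe p e) j))"
  for w :: "(real^'a) \<times> (real^'b) \<Rightarrow> real"
  unfolding detM_def detF_def Let_def by simp

lemma Mform_quad:
  fixes w :: "(real^'a) \<times> (real^'b) \<Rightarrow> real"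
  assumes sm: "smooth_on W w" and pW: "p \<in> W"
  shows "Qf d (\<lambda>i j. Mform w p (e i) (e j)) x = Mform w p (\<Sum>j<d. x j *\<^sub>R e j) (\<Sum>j<d. x j *\<^sub>R e j)"
proof -
  define Z where "Z = (\<Sum>j<d. x j *\<^sub>R e j)"
  have l: "linear (Mform w p Y)" for Y using Mform_lin[OF sm pW] .
  have s: "Mform w p Y Y' = Mform w p Y' Y" for Y Y' using Mform_sym[OF sm pW] .
  have e1: "Mform w p Z Y = (\<Sum>i<d. x i * Mform w p (e i) Y)" for Y
  proof -
    have "Mform w p Z Y = Mform w p Y Z" by (rule s)
    also have "\<dots> = (\<Sum>i<d. x i * Mform w p Y (e i))"
      unfolding Z_def linear_sum[OF l] linear_cmul[OF l] by simp
    also have "\<dots> = (\<Sum>i<d. x i * Mform w p (e i) Y)" using s by simp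
    finally show ?thesis .
  qed
  have "Mform w p Z Z = (\<Sum>j<d. x j * Mform w p Z (e j))"
    unfolding Z_def[symmetric] by (subst (2) Z_def) (simp add: linear_sum[OF l] linear_cmul[OF l])
  also have "\<dots> = (\<Sum>j<d. \<Sum>i<d. x j * (x i * Mform w p (e i) (e j)))"
    unfolding e1 by (simp add: sum_distrib_left)
  also have "\<dots> = (\<Sum>i<d. \<Sum>j<d. x i * Mform w p (e i) (e j) * x j)"
    by (subst sum.swap) (simp add: mult_ac)
  finally show ?thesis unfolding Qf_def Z_def by simp
qed

lemma det_compare:
  fixes u v :: "(real^'a) \<times> (real^'b) \<Rightarrow> real"
  assumes smu: "smooth_on U u" and smv: "smooth_on V v" and pU: "p \<in> U" and pV: "p \<in> V"
    and ps: "p \<in> sphere_prod" and Mv: "M_posdef v p"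
    and le: "\<And>X. X \<in> tangent p \<Longrightarrow> Mform v p X X \<le> Mform u p X X"
  shows "0 < detM v p \<and> detM v p \<le> detM u p"
proof -
  define e where "e = (SOME e. is_onframe p e)"
  define d where "d = tdim TYPE('a \<times> 'b)"
  have fr: "is_onframe p e" unfolding e_def by (rule frame_exists[OF ps])
  have eT: "\<And>i. i < d \<Longrightarrow> e i \<in> tangent p" and on: "\<And>i j. i < d \<Longrightarrow> j < d \<Longrightarrow> e i \<bullet> e j = (if i = j then 1 else 0)"
    and sp: "span (e ` {..<d}) = tangent p"
    using fr unfolding is_onframe_def d_def by auto
  have ZT: "(\<Sum>j<d. x j *\<^sub>R e j) \<in> tangent p" for x
  proof -
    have "(\<Sum>j<d. x j *\<^sub>R e j) \<in> span (e ` {..<d})"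
      by (intro span_sum span_mul span_base) auto
    thus ?thesis using sp by simp
  qed
  have Zi: "(\<Sum>j<d. x j *\<^sub>R e j) \<bullet> e i = x i" if i: "i < d" for x i
  proof -
    have "(\<Sum>j<d. x j *\<^sub>R e j) \<bullet> e i = (\<Sum>j<d. x j * (e j \<bullet> e i))"
      by (simp add: inner_sum_left)
    also have "\<dots> = (\<Sum>j<d. if j = i then x j else 0)"
      by (intro sum.cong refl) (use on i in auto)
    also have "\<dots> = x i" using i by simp
    finally show ?thesis .
  qed
  have "0 < detF d (\<lambda>i j. Mform v p (e i) (e j)) \<and> detF d (\<lambda>i j. Mform v p (e i) (e j)) \<le> detF d (\<lambda>i j. Mform u p (e i) (e j))"
  proof (rule detF_mono)
    fix i j show "Mform v p (e i) (e j) = Mform v p (e j) (e i)" using Mform_sym[OF smv pV] .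
  next
    fix i j show "Mform u p (e i) (e j) = Mform u p (e j) (e i)" using Mform_sym[OF smu pU] .
  next
    fix x :: "nat \<Rightarrow> real" assume "\<exists>i<d. x i \<noteq> 0"
    then obtain i where i: "i < d" "x i \<noteq> 0" by blast
    have "(\<Sum>j<d. x j *\<^sub>R e j) \<noteq> 0" using Zi[OF i(1), of x] i(2) by auto
    hence "0 < Mform v p (\<Sum>j<d. x j *\<^sub>R e j) (\<Sum>j<d. x j *\<^sub>R e j)"
      using Mv ZT unfolding M_posdef_def by blast
    thus "0 < Qf d (\<lambda>i j. Mform v p (e i) (e j)) x" unfolding Mform_quad[OF smv pV] .
  next
    fix x show "Qf d (\<lambda>i j. Mform v p (e i) (e j)) x \<le> Qf d (\<lambda>i j. Mform u p (e i) (e j)) x"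
      unfolding Mform_quad[OF smv pV] Mform_quad[OF smu pU] using le ZT by blast
  qed
  thus ?thesis unfolding detM_detF e_def[symmetric] d_def[symmetric] .
qed

lemma g_mono:
  fixes g :: "real \<Rightarrow> real \<Rightarrow> real \<Rightarrow> real"
  assumes g_smooth: "smooth_on UNIV (\<lambda>(r, p, q). g r p q)"
    and g_r: "\<And>r p q. r \<le> r0 \<Longrightarrow> deriv (\<lambda>s. g s p q) r > 0"
    and r: "r1 < r2" "r2 \<le> r0"
  shows "g r1 a b < g r2 a b"
proof -
  have D: "DERIV (\<lambda>s. g s a b) s :> deriv (\<lambda>s. g s a b) s" for s
  proof -
    have "((\<lambda>t. (t, a, b)) has_vector_derivative (1, 0, 0)) (at s)"
      by (auto intro!: derivative_eq_intros simp: zero_prod_def)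
    from vd_chain[OF this smooth_hasd[OF g_smooth UNIV_I]]
    have "DERIV (\<lambda>t. g t a b) s :> frechet_derivative (\<lambda>(r, p, q). g r p q) (at (s, a, b)) (1, 0, 0)"
      by simp
    thus ?thesis using DERIV_imp_deriv by metis
  qed
  from MVT2[OF r(1), of "\<lambda>s. g s a b" "\<lambda>s. deriv (\<lambda>s. g s a b) s"] D
  obtain z where z: "r1 < z" "z < r2" "g r2 a b - g r1 a b = (r2 - r1) * deriv (\<lambda>s. g s a b) z" by blast
  have "deriv (\<lambda>s. g s a b) z > 0" using g_r[of z] z r by simp
  hence "(r2 - r1) * deriv (\<lambda>s. g s a b) z > 0" using r by simp
  thus ?thesis using z by simp
qed


theorem lemma3p1:
  fixes \<Omega> :: "((real^'a) \<times> (real^'b)) set"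
    and g :: "real \<Rightarrow> real \<Rightarrow> real \<Rightarrow> real"
    and r0 :: real
    and u v :: "(real^'a) \<times> (real^'b) \<Rightarrow> real"
    and U V :: "((real^'a) \<times> (real^'b)) set"
  assumes dim_a: "CARD('a) \<ge> 2" and dim_b: "CARD('b) \<ge> 2"
    and dom_open: "openin (top_of_set sphere_prod) \<Omega>"
    and dom_conn: "connected \<Omega>" and dom_ne: "\<Omega> \<noteq> {}"
    and g_pos: "\<And>r p q. g r p q > 0"
    and g_smooth: "smooth_on UNIV (\<lambda>(r, p, q). g r p q)"
    and g_r: "\<And>r p q. r \<le> r0 \<Longrightarrow> deriv (\<lambda>s. g s p q) r > 0"
    and u_smooth: "smooth_on U u" and U_nbhd: "closure \<Omega> \<subseteq> U"
    and v_smooth: "smooth_on V v" and V_nbhd: "closure \<Omega> \<subseteq> V"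
    and Mu: "\<And>p. p \<in> \<Omega> \<Longrightarrow> M_posdef u p"
    and Mv: "\<And>p. p \<in> \<Omega> \<Longrightarrow> M_posdef v p"
    and u_le: "\<And>p. p \<in> \<Omega> \<Longrightarrow> u p \<le> r0"
    and v_le: "\<And>p. p \<in> \<Omega> \<Longrightarrow> v p \<le> r0"
    and G_le: "\<And>p. p \<in> \<Omega> \<Longrightarrow> Gop g u p \<le> Gop g v p"
  shows "(\<forall>p\<in>\<Omega>. v p - (SUP q\<in>closure \<Omega> - \<Omega>. v q - u q) \<le> u p)
         \<or> (\<forall>p\<in>\<Omega>. v p \<le> u p)"
proof (rule ccontr)
  assume "\<not> ?thesis"
  then obtain p1 p2 where p1: "p1 \<in> \<Omega>" "v p1 - (SUP q\<in>closure \<Omega> - \<Omega>. v q - u q) > u p1"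
    and p2: "p2 \<in> \<Omega>" "v p2 > u p2" by (auto simp: not_le)
  define c where "c = (SUP q\<in>closure \<Omega> - \<Omega>. v q - u q)"
  define K where "K = closure \<Omega>"
  define f where "f q = v q - u q" for q
  have sub: "\<Omega> \<subseteq> sphere_prod" using openin_imp_subset[OF dom_open] by simp
  have bS: "bounded (sphere_prod :: ((real^'a) \<times> (real^'b)) set)"
    unfolding sphere_prod_def by (intro bounded_Times) auto
  have cS: "closed (sphere_prod :: ((real^'a) \<times> (real^'b)) set)"
    unfolding sphere_prod_def by (intro closed_Times) auto
  have KS: "K \<subseteq> sphere_prod" unfolding K_def using closure_minimal[OF sub cS] .
  have cK: "compact K" unfolding K_def using bounded_subset[OF bS sub] by simp
  have neK: "K \<noteq> {}" unfolding K_def using dom_ne closure_subset by blast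
  have OK: "\<Omega> \<subseteq> K" unfolding K_def by (rule closure_subset)
  have contf: "continuous_on K f" unfolding f_def
    using continuous_on_subset[OF smooth_cont[OF v_smooth] V_nbhd[folded K_def]]
      continuous_on_subset[OF smooth_cont[OF u_smooth] U_nbhd[folded K_def]]
    by (intro continuous_on_diff)
  obtain pm where pm: "pm \<in> K" "\<And>q. q \<in> K \<Longrightarrow> f q \<le> f pm"
    using continuous_attains_sup[OF cK neK contf] by blast
  have pmO: "pm \<in> \<Omega>"
  proof (rule ccontr)
    assume "pm \<notin> \<Omega>"
    hence pmB: "pm \<in> closure \<Omega> - \<Omega>" using pm(1) unfolding K_def by simp
    have "bdd_above ((\<lambda>q. v q - u q) ` (closure \<Omega> - \<Omega>))"
      using pm(2) unfolding K_def f_def by (intro bdd_aboveI2[of _ _ "f pm"]) (auto simp: f_def)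
    hence "f pm \<le> c" unfolding c_def f_def using pmB by (intro cSUP_upper) auto
    moreover have "f p1 \<le> f pm" using OK p1(1) by (intro pm(2)) auto
    ultimately show False using p1(2) unfolding c_def f_def by simp
  qed
  have vu: "u pm < v pm" using pm(2)[of p2] OK p2 unfolding f_def by auto
  have pU: "pm \<in> U" and pV: "pm \<in> V" using pm(1) U_nbhd V_nbhd unfolding K_def by auto
  have pS: "pm \<in> sphere_prod" using pmO sub by auto
  obtain T where T: "open T" "\<Omega> = sphere_prod \<inter> T" using dom_open unfolding openin_open by blast
  have pT: "pm \<in> T" using pmO T by auto
  have MP: "D1 v pm X = D1 u pm X \<and> hess v pm X X \<le> hess u pm X X" if X: "X \<in> tangent pm" for X
  proof (rule max_point[OF u_smooth v_smooth pU pV pS X T(1) pT])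
    fix q assume "q \<in> T" "q \<in> sphere_prod"
    hence "q \<in> K" using T OK by auto
    thus "v q - u q \<le> v pm - u pm" using pm(2) unfolding f_def by simp
  qed
  have GE: "grad_x v pm = grad_x u pm \<and> grad_y v pm = grad_y u pm"
    using grads_eq[OF u_smooth v_smooth pU pV pS] MP by blast
  have Mle: "Mform v pm X X \<le> Mform u pm X X" if "X \<in> tangent pm" for X
    using MP[OF that] GE unfolding Mform_def by simp
  have D: "0 < detM v pm \<and> detM v pm \<le> detM u pm"
    by (rule det_compare[OF u_smooth v_smooth pU pV pS Mv[OF pmO] Mle])
  define s1 where "s1 = sq_grad_x v pm"
  define s2 where "s2 = sq_grad_y v pm"
  have s: "sq_grad_x u pm = s1" "sq_grad_y u pm = s2" unfolding s1_def s2_def sq_grad_x_def sq_grad_y_def using GE by auto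
  have gl: "g (u pm) s1 s2 < g (v pm) s1 s2"
    by (rule g_mono[OF g_smooth g_r vu v_le[OF pmO]])
  have gp: "0 < g (u pm) s1 s2" using g_pos .
  have "Gop g v pm = detM v pm / g (v pm) s1 s2" unfolding Gop_def s1_def s2_def ..
  also have "\<dots> \<le> detM u pm / g (v pm) s1 s2" using D g_pos[of "v pm" s1 s2] by (intro divide_right_mono) auto
  also have "\<dots> < detM u pm / g (u pm) s1 s2" using D gl gp by (intro divide_strict_left_mono) auto
  also have "\<dots> = Gop g u pm" unfolding Gop_def s ..
  finally show False using G_le[OF pmO] by simp
qed


end
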